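(* Let $a\in\mathbb{O}$ have norm one. The following are equivalent: (1) ${}^*\mathbb{O}_l(a,1)$ satisfies $(x^2,x^2,x^2)=0$; (2) ${}^*\mathbb{O}_r(a,1)$ satisfies $(x^2,x^2,x^2)=0$; (3) $a^2=\pm1$. Under these conditions ${}^*\mathbb{O}_l(a,1)$ and ${}^*\mathbb{O}_r(a,1)$ are isomorphic; moreover, if $a^2=-1$ then ${}^*\mathbb{O}_l(a,1)$ has degree four.
   Context: $\mathbb{O}$ is the real octonion algebra with conjugation $\bar x$. For norm-one $a$, ${}^*\mathbb{O}_l(a,1)$ and ${}^*\mathbb{O}_r(a,1)$ are the normed space of $\mathbb{O}$ with products $x\odot y=(\bar x a)y$ and $x\odot y=\bar x(ay)$ respectively. Here $x^2=x\odot x$ and $(x,y,z)=(x\odot y)\odot z-x\odot(y\odot z)$. The degree of a finite-dimensional algebra is the smallest $n$ such that every single-generated subalgebra has dimension $\le n$. *)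

theory Defs
  imports "HOL-Analysis.Analysis"
begin

text \<open>Real quaternions as pairs of complex numbers and real octonions as pairs of
quaternions, via the Cayley--Dickson doubling
  (a,b)(c,d) = (a c - conj(d) b, d a + b conj(c)),  conj(a,b) = (conj a, -b).
The product-type norm is the Euclidean norm on R^4 resp. R^8.\<close>

type_synonym quat = "complex \<times> complex"
type_synonym octonion = "quat \<times> quat"

definition qmul :: "quat \<Rightarrow> quat \<Rightarrow> quat" where
  "qmul x y = (fst x * fst y - cnj (snd y) * snd x, snd y * fst x + snd x * cnj (fst y))"

definition qconj :: "quat \<Rightarrow> quat" where
  "qconj x = (cnj (fst x), - snd x)"

definition omul :: "octonion \<Rightarrow> octonion \<Rightarrow> octonion" where
  "omul x y = (qmul (fst x) (fst y) - qmul (qconj (snd y)) (snd x),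
               qmul (snd y) (fst x) + qmul (snd x) (qconj (fst y)))"

definition oconj :: "octonion \<Rightarrow> octonion" where
  "oconj x = (qconj (fst x), - snd x)"

definition ounit :: octonion where
  "ounit = ((1, 0), (0, 0))"

text \<open>The products of *O_l(a,1) and *O_r(a,1).\<close>
definition lprod :: "octonion \<Rightarrow> octonion \<Rightarrow> octonion \<Rightarrow> octonion" where
  "lprod a x y = omul (omul (oconj x) a) y"

definition rprod :: "octonion \<Rightarrow> octonion \<Rightarrow> octonion \<Rightarrow> octonion" where
  "rprod a x y = omul (oconj x) (omul a y)"

definition assoc :: "('v \<Rightarrow> 'v \<Rightarrow> 'v::real_vector) \<Rightarrow> 'v \<Rightarrow> 'v \<Rightarrow> 'v \<Rightarrow> 'v" where
  "assoc m x y z = m (m x y) z - m x (m y z)"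

definition square_assoc_identity :: "('v \<Rightarrow> 'v \<Rightarrow> 'v::real_vector) \<Rightarrow> bool" where
  "square_assoc_identity m \<longleftrightarrow> (\<forall>x. assoc m (m x x) (m x x) (m x x) = 0)"

definition algebra_iso :: "('v::real_vector \<Rightarrow> 'v \<Rightarrow> 'v) \<Rightarrow> ('w::real_vector \<Rightarrow> 'w \<Rightarrow> 'w) \<Rightarrow> bool" where
  "algebra_iso m n \<longleftrightarrow> (\<exists>f. linear f \<and> bij f \<and> (\<forall>x y. f (m x y) = n (f x) (f y)))"

definition gen_subalgebra :: "('v::real_vector \<Rightarrow> 'v \<Rightarrow> 'v) \<Rightarrow> 'v \<Rightarrow> 'v set" where
  "gen_subalgebra m x = \<Inter>{S. subspace S \<and> (\<forall>u\<in>S. \<forall>v\<in>S. m u v \<in> S) \<and> x \<in> S}"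

definition algebra_degree :: "('v::euclidean_space \<Rightarrow> 'v \<Rightarrow> 'v) \<Rightarrow> nat" where
  "algebra_degree m = (LEAST n. \<forall>x. dim (gen_subalgebra m x) \<le> n)"

end

theory Submission
  imports Defs
begin


lemma oeq: "(x::octonion) = y \<longleftrightarrow>
  Re (fst (fst x)) = Re (fst (fst y)) \<and> Im (fst (fst x)) = Im (fst (fst y)) \<and>
  Re (snd (fst x)) = Re (snd (fst y)) \<and> Im (snd (fst x)) = Im (snd (fst y)) \<and>
  Re (fst (snd x)) = Re (fst (snd y)) \<and> Im (fst (snd x)) = Im (fst (snd y)) \<and>
  Re (snd (snd x)) = Re (snd (snd y)) \<and> Im (snd (snd x)) = Im (snd (snd y))"
  by (auto simp: prod_eq_iff complex_eq_iff)

lemmas osimps = oeq omul_def qmul_def oconj_def qconj_def ounit_def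

definition nsq :: "octonion \<Rightarrow> real" where "nsq x = inner x x"
definition ore :: "octonion \<Rightarrow> real" where "ore x = Re (fst (fst x))"

lemma inner_oct: "inner (x::octonion) y =
  Re (fst (fst x)) * Re (fst (fst y)) + Im (fst (fst x)) * Im (fst (fst y)) +
  Re (snd (fst x)) * Re (snd (fst y)) + Im (snd (fst x)) * Im (snd (fst y)) +
  Re (fst (snd x)) * Re (fst (snd y)) + Im (fst (snd x)) * Im (fst (snd y)) +
  Re (snd (snd x)) * Re (snd (snd y)) + Im (snd (snd x)) * Im (snd (snd y))"
  by (cases x; cases y) (auto simp: inner_complex_def)

lemma nsq_oct: "nsq x =
  (Re (fst (fst x)))^2 + (Im (fst (fst x)))^2 +
  (Re (snd (fst x)))^2 + (Im (snd (fst x)))^2 +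
  (Re (fst (snd x)))^2 + (Im (fst (snd x)))^2 +
  (Re (snd (snd x)))^2 + (Im (snd (snd x)))^2"
  unfolding nsq_def inner_oct by (simp add: power2_eq_square)

lemma nsq_norm: "nsq x = (norm x)^2"
  unfolding nsq_def by (simp add: dot_square_norm)

lemmas csimps = osimps nsq_oct inner_oct ore_def

lemma omul_add_left: "omul (x + y) z = omul x z + omul y z"
  unfolding osimps by (simp add: algebra_simps)
lemma omul_add_right: "omul z (x + y) = omul z x + omul z y"
  unfolding osimps by (simp add: algebra_simps)
lemma omul_scaleR_left: "omul (c *\<^sub>R x) z = c *\<^sub>R omul x z"
  unfolding osimps by (simp add: algebra_simps)
lemma omul_scaleR_right: "omul z (c *\<^sub>R x) = c *\<^sub>R omul z x"
  unfolding osimps by (simp add: algebra_simps)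
lemma omul_minus_left: "omul (- x) z = - omul x z"
  unfolding osimps by (simp add: algebra_simps)
lemma omul_minus_right: "omul z (- x) = - omul z x"
  unfolding osimps by (simp add: algebra_simps)
lemma omul_diff_left: "omul (x - y) z = omul x z - omul y z"
  unfolding osimps by (simp add: algebra_simps)
lemma omul_diff_right: "omul z (x - y) = omul z x - omul z y"
  unfolding osimps by (simp add: algebra_simps)
lemma omul_zero_left: "omul 0 z = 0"
  unfolding osimps by (simp add: algebra_simps)
lemma omul_zero_right: "omul z 0 = 0"
  unfolding osimps by (simp add: algebra_simps)
lemma oconj_add: "oconj (x + y) = oconj x + oconj y"
  unfolding osimps by (simp add: algebra_simps)
lemma oconj_scaleR: "oconj (c *\<^sub>R x) = c *\<^sub>R oconj x"
  unfolding osimps by (simp add: algebra_simps)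
lemma oconj_minus: "oconj (- x) = - oconj x"
  unfolding osimps by (simp add: algebra_simps)
lemma oconj_diff: "oconj (x - y) = oconj x - oconj y"
  unfolding osimps by (simp add: algebra_simps)
lemma oconj_zero: "oconj 0 = 0"
  unfolding osimps by (simp add: algebra_simps)
lemma oconj_oconj: "oconj (oconj x) = x"
  unfolding osimps by (simp add: algebra_simps)
lemma oconj_ounit: "oconj ounit = ounit"
  unfolding osimps by simp
lemma omul_ounit_left: "omul ounit x = x"
  unfolding osimps by simp
lemma omul_ounit_right: "omul x ounit = x"
  unfolding osimps by simp

lemmas lin = omul_add_left omul_add_right omul_scaleR_left omul_scaleR_right
  omul_minus_left omul_minus_right omul_diff_left omul_diff_right omul_zero_left omul_zero_right
  oconj_add oconj_scaleR oconj_minus oconj_diff oconj_zero oconj_oconj oconj_ounit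
  omul_ounit_left omul_ounit_right

lemma oconj_omul: "oconj (omul x y) = omul (oconj y) (oconj x)"
  unfolding osimps by (simp; (intro conjI)?; algebra)

lemma flex: "omul (omul x y) x = omul x (omul y x)"
  unfolding osimps by (simp; (intro conjI)?; algebra)

lemma lalt: "omul x (omul x y) = omul (omul x x) y"
  unfolding osimps by (simp; (intro conjI)?; algebra)

lemma ralt: "omul (omul y x) x = omul y (omul x x)"
  unfolding osimps by (simp; (intro conjI)?; algebra)

lemma conj_mul_left: "omul (oconj x) x = nsq x *\<^sub>R ounit"
  unfolding csimps by (simp; (intro conjI)?; algebra)

lemma conj_mul_right: "omul x (oconj x) = nsq x *\<^sub>R ounit"
  unfolding csimps by (simp; (intro conjI)?; algebra)

lemma I5: "omul (omul (oconj x) a) x = omul (oconj x) (omul a x)"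
  unfolding osimps by (simp; (intro conjI)?; algebra)

lemma G11: "omul (omul a a) (oconj a) = nsq a *\<^sub>R a"
  unfolding csimps by (simp; (intro conjI)?; algebra)


lemma mid_moufang: "omul (omul x y) (omul z x) = omul (omul x (omul y z)) x"
  unfolding osimps by (simp; (intro conjI)?; algebra)

lemma rmoufang: "omul (omul (omul z x) w) x = omul z (omul x (omul w x))"
  unfolding osimps by (simp; (intro conjI)?; algebra)

lemma sq_ay: "omul (omul a y) (omul a y) = omul (omul a (omul y a)) y"
  unfolding osimps by (simp; (intro conjI)?; algebra)

lemma lm_inst: "omul a (omul y (omul a y)) = omul (omul a (omul y a)) y"
  unfolding osimps by (simp; (intro conjI)?; algebra)

lemma K1: "omul (omul (omul y (omul a y)) a) y = omul (omul y a) (omul (omul y a) y)"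
  by (metis flex rmoufang)

lemma K2: "omul (omul (omul y a) y) (omul a y) = omul y (omul a (omul y (omul a y)))"
  by (metis flex ralt sq_ay lm_inst)


lemma oconj_imag: "ore e = 0 \<Longrightarrow> oconj e = - e"
  unfolding csimps by simp

lemma sq_imag: "ore a = 0 \<Longrightarrow> omul a a = - (nsq a *\<^sub>R ounit)"
  unfolding csimps by (simp add: power2_eq_square; (intro conjI)?; algebra)

lemma anticomm: "ore a = 0 \<Longrightarrow> ore e = 0 \<Longrightarrow> omul e a = - omul a e - (2 * inner e a) *\<^sub>R ounit"
  unfolding csimps by (simp; (intro conjI)?; algebra)

lemma sq_gen: "omul a a = (2 * ore a) *\<^sub>R a - nsq a *\<^sub>R ounit"
  unfolding csimps by (simp add: power2_eq_square; (intro conjI)?; algebra)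

lemma cube_gen: "omul (omul a a) a = (4 * ore a * ore a - nsq a) *\<^sub>R a - (2 * ore a * nsq a) *\<^sub>R ounit"
  unfolding csimps by (simp add: power2_eq_square; (intro conjI)?; algebra)

lemma conj_gen: "oconj a = (2 * ore a) *\<^sub>R ounit - a"
  unfolding csimps by simp

lemma ore_lin: "ore (x + y) = ore x + ore y" "ore (c *\<^sub>R x) = c * ore x" "ore (- x) = - ore x"
  "ore (x - y) = ore x - ore y" "ore ounit = 1" "ore 0 = 0"
  unfolding csimps by simp_all

lemma inner_unit_mul: "ore a = 0 \<Longrightarrow> ore e = 0 \<Longrightarrow> inner ounit (omul a e) = - inner a e"
  unfolding csimps by (simp; algebra)
lemma inner_e_ae: assumes "ore a = 0" shows "inner e (omul a e) = 0"
  unfolding csimps by (simp add: assms[unfolded ore_def]; algebra)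
lemma inner_a_ae: assumes "ore e = 0" shows "inner a (omul a e) = 0"
  unfolding csimps by (simp add: assms[unfolded ore_def]; algebra)
lemma inner_unit: "inner ounit x = ore x"
  unfolding csimps by simp


lemma E: assumes "ore e = 0" shows "omul (omul e a) e = - (nsq e *\<^sub>R oconj a) - (2 * inner e a) *\<^sub>R e"
  unfolding csimps by (simp add: assms[unfolded ore_def]; (intro conjI)?; algebra)

definition e0 :: "octonion \<Rightarrow> octonion" where
  "e0 a = (if Im (fst (fst a)) = 0 \<and> Re (snd (fst a)) = 0 then ((Complex 0 1, 0), (0, 0))
           else ((Complex 0 (- Re (snd (fst a))), Complex (Im (fst (fst a))) 0), (0, 0)))"

definition eo :: "octonion \<Rightarrow> octonion" where
  "eo a = (1 / norm (e0 a)) *\<^sub>R e0 a"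

lemma e0_props: "ore (e0 a) = 0" "inner (e0 a) a = 0" "e0 a \<noteq> 0"
  unfolding e0_def csimps by (auto simp: algebra_simps)

lemma eo_props: "ore (eo a) = 0" "inner (eo a) a = 0" "nsq (eo a) = 1"
proof -
  show "ore (eo a) = 0" unfolding eo_def by (simp add: ore_lin e0_props)
  show "inner (eo a) a = 0" unfolding eo_def by (simp add: e0_props)
  have "norm (eo a) = 1" unfolding eo_def using e0_props(3) by simp
  then show "nsq (eo a) = 1" by (simp add: nsq_norm)
qed

lemma witness_l: assumes "nsq a = 1" shows "lprod a (eo a) (eo a) = oconj a"
proof -
  have "lprod a (eo a) (eo a) = - omul (omul (eo a) a) (eo a)"
    unfolding lprod_def by (simp add: oconj_imag eo_props lin)
  also have "\<dots> = oconj a" using E[OF eo_props(1), of a] eo_props by simp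
  finally show ?thesis .
qed

lemma witness_r: assumes "nsq a = 1" shows "rprod a (eo a) (eo a) = oconj a"
proof -
  have "rprod a (eo a) (eo a) = - omul (omul (eo a) a) (eo a)"
    unfolding rprod_def by (simp add: oconj_imag eo_props lin flex)
  also have "\<dots> = oconj a" using E[OF eo_props(1), of a] eo_props by simp
  finally show ?thesis .
qed

lemma l_forces: assumes "nsq a = 1" "square_assoc_identity (lprod a)"
  shows "oconj a = omul (omul a a) a"
proof -
  have "assoc (lprod a) (oconj a) (oconj a) (oconj a) = 0"
    using assms(2) witness_l[OF assms(1)] unfolding square_assoc_identity_def by metis
  moreover have "lprod a (oconj a) (oconj a) = a"
    unfolding lprod_def using G11[of a] assms(1) by (simp add: oconj_oconj)
  moreover have "lprod a a (oconj a) = oconj a"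
    unfolding lprod_def using conj_mul_left[of a] assms(1) by (simp add: lin)
  moreover have "lprod a (oconj a) a = omul (omul a a) a"
    unfolding lprod_def by (simp add: oconj_oconj)
  ultimately show ?thesis unfolding assoc_def by simp
qed

lemma r_forces: assumes "nsq a = 1" "square_assoc_identity (rprod a)"
  shows "oconj a = omul (omul a a) a"
proof -
  have "assoc (rprod a) (oconj a) (oconj a) (oconj a) = 0"
    using assms(2) witness_r[OF assms(1)] unfolding square_assoc_identity_def by metis
  moreover have "rprod a (oconj a) (oconj a) = a"
    unfolding rprod_def using conj_mul_right[of a] assms(1) by (simp add: oconj_oconj lin)
  moreover have "rprod a a (oconj a) = oconj a"
    unfolding rprod_def using conj_mul_right[of a] assms(1) by (simp add: lin)
  moreover have "rprod a (oconj a) a = omul (omul a a) a"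
    unfolding rprod_def by (simp add: oconj_oconj lalt)
  ultimately show ?thesis unfolding assoc_def by simp
qed


lemma lprod_imag_ok:
  assumes ca: "oconj a = - a"
  shows "square_assoc_identity (lprod a)"
  unfolding square_assoc_identity_def
proof
  fix x
  define y where "y = lprod a x x"
  have y: "y = omul (oconj x) (omul a x)" using I5 y_def lprod_def by simp
  have cy: "oconj y = - y"
    unfolding y_def lprod_def by (simp add: oconj_omul lin ca I5)
  define z where "z = lprod a y y"
  have z: "z = - omul (omul y a) y" by (simp add: z_def lprod_def cy lin)
  have cz: "oconj z = omul (omul y a) y"
    by (simp add: z oconj_omul lin cy ca flex)
  have "assoc (lprod a) y y y = lprod a z y - lprod a y z"
    by (simp add: assoc_def z_def)
  also have "\<dots> = omul (omul (omul (omul y a) y) a) y - omul (omul y a) (omul (omul y a) y)"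
    unfolding lprod_def cz by (simp add: cy z lin)
  also have "\<dots> = 0" using K1[of y a] by (simp add: flex)
  finally show "assoc (lprod a) (lprod a x x) (lprod a x x) (lprod a x x) = 0" by (simp add: y_def)
qed

lemma rprod_imag_ok:
  assumes ca: "oconj a = - a"
  shows "square_assoc_identity (rprod a)"
  unfolding square_assoc_identity_def
proof
  fix x
  define y where "y = rprod a x x"
  have cy: "oconj y = - y"
    unfolding y_def rprod_def by (simp add: oconj_omul lin ca I5)
  define z where "z = rprod a y y"
  have z: "z = - omul y (omul a y)" by (simp add: z_def rprod_def cy lin)
  have cz: "oconj z = omul (omul y a) y"
    by (simp add: z oconj_omul lin cy ca)
  have "assoc (rprod a) y y y = rprod a z y - rprod a y z"
    by (simp add: assoc_def z_def)
  also have "\<dots> = omul (omul (omul y a) y) (omul a y) - omul y (omul a (omul y (omul a y)))"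
    unfolding rprod_def cz by (simp add: cy z lin)
  also have "\<dots> = 0" using K2[of y a] by simp
  finally show "assoc (rprod a) (rprod a x x) (rprod a x x) (rprod a x x) = 0" by (simp add: y_def)
qed

lemma lprod_real_ok:
  assumes "a = s *\<^sub>R ounit"
  shows "square_assoc_identity (lprod a)"
  unfolding square_assoc_identity_def assoc_def lprod_def assms
  by (simp add: lin conj_mul_left)

lemma rprod_real_ok:
  assumes "a = s *\<^sub>R ounit"
  shows "square_assoc_identity (rprod a)"
  unfolding square_assoc_identity_def assoc_def rprod_def assms
  by (simp add: lin conj_mul_left)


lemma ounit_ne0: "ounit \<noteq> 0"
  by (metis ore_lin(5) ore_lin(6) zero_neq_one)

lemma cube_forces: assumes n: "nsq a = 1" and h: "oconj a = omul (omul a a) a"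
  shows "omul a a = ounit \<or> omul a a = - ounit"
proof -
  define r where "r = ore a"
  have "(2*r) *\<^sub>R ounit - a = (4 * r * r - 1) *\<^sub>R a - (2 * r) *\<^sub>R ounit"
    using h conj_gen[of a] cube_gen[of a] n by (simp add: r_def)
  then have "(2*r) *\<^sub>R ounit + (2*r) *\<^sub>R ounit = (4 * r * r) *\<^sub>R a"
    by (simp add: algebra_simps)
  moreover have "(4*r) *\<^sub>R ounit = (2*r) *\<^sub>R ounit + (2*r) *\<^sub>R ounit"
    by (simp add: scaleR_add_left[symmetric])
  ultimately have "(4*r) *\<^sub>R ounit = (4 * r * r) *\<^sub>R a" by simp
  then have "(1/4) *\<^sub>R ((4*r) *\<^sub>R ounit) = (1/4) *\<^sub>R ((4 * r * r) *\<^sub>R a)"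
    by simp
  then have eq: "r *\<^sub>R ounit = (r * r) *\<^sub>R a"
    by simp
  show ?thesis
  proof (cases "r = 0")
    case True
    then show ?thesis using sq_gen[of a] n by (simp add: r_def)
  next
    case False
    have "r *\<^sub>R ounit = r *\<^sub>R (r *\<^sub>R a)" using eq by simp
    then have "(1/r) *\<^sub>R (r *\<^sub>R ounit) = (1/r) *\<^sub>R (r *\<^sub>R (r *\<^sub>R a))" by simp
    moreover have "(1/r) * r = 1" "(1/r) * (r * r) = r" using False by simp_all
    ultimately have ur: "ounit = r *\<^sub>R a" by simp
    have "omul a a = 2 *\<^sub>R (r *\<^sub>R a) - ounit" using sq_gen[of a] n by (simp add: r_def)
    then show ?thesis using ur[symmetric] by (simp add: scaleR_2)
  qed
qed

lemma sq_plus: assumes n: "nsq a = 1" and h: "omul a a = ounit"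
  shows "a = ounit \<or> a = - ounit"
proof -
  define r where "r = ore a"
  have "(2*r) *\<^sub>R a - ounit = ounit" using sq_gen[of a] n h by (simp add: r_def)
  then have "2 *\<^sub>R (r *\<^sub>R a) = 2 *\<^sub>R ounit"
    by (simp add: algebra_simps scaleR_2)
  then have "(1/2) *\<^sub>R (2 *\<^sub>R (r *\<^sub>R a)) = (1/2) *\<^sub>R (2 *\<^sub>R ounit)" by simp
  then have e: "r *\<^sub>R a = ounit" by simp
  have "r * r = 1" using arg_cong[OF e, of ore] by (simp add: ore_lin r_def)
  then have "r = 1 \<or> r = -1"
    using square_eq_1_iff by blast
  then show ?thesis using e by (metis scaleR_minus1_left scaleR_one minus_minus)
qed

lemma sq_minus: assumes n: "nsq a = 1" and h: "omul a a = - ounit"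
  shows "ore a = 0"
proof -
  define r where "r = ore a"
  have "(2*r) *\<^sub>R a - ounit = - ounit" using sq_gen[of a] n h by (simp add: r_def)
  then have e: "r *\<^sub>R a = 0" by simp
  have "a \<noteq> 0" using n unfolding nsq_def by auto
  then show ?thesis using e by (simp add: r_def)
qed


lemma iso_real: assumes "a = s *\<^sub>R ounit" shows "algebra_iso (lprod a) (rprod a)"
proof -
  have "lprod a = rprod a" by (intro ext) (simp add: lprod_def rprod_def assms lin)
  then show ?thesis unfolding algebra_iso_def
    by (intro exI[of _ id]) (auto simp: linear_id)
qed

lemma iso_imag: assumes ra: "ore a = 0" and n: "nsq a = 1"
  shows "algebra_iso (lprod a) (rprod a)"
proof -
  define f where "f x = - omul (omul a x) a" for x
  have ca: "oconj a = - a" using oconj_imag[OF ra] .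
  have aa: "omul a a = - ounit" using sq_imag[OF ra] n by simp
  have lf: "linear f"
    by (rule linearI) (simp_all add: f_def lin)
  have ff: "f (f x) = x" for x
  proof -
    have "f (f x) = omul (omul a (omul (omul a x) a)) a" by (simp add: f_def lin)
    also have "omul a (omul (omul a x) a) = omul (omul a (omul a x)) a" by (simp add: flex)
    also have "\<dots> = - omul x a" by (simp add: lalt aa lin)
    finally show ?thesis by (simp add: lin ralt aa)
  qed
  have bf: "bij f"
    by (rule o_bij[of f]) (auto simp: ff)
  have hom: "f (lprod a x y) = rprod a (f x) (f y)" for x y
  proof -
    have c: "oconj (f x) = - omul a (omul (oconj x) a)"
      by (simp add: f_def oconj_omul lin ca)
    have d: "omul a (f y) = omul y a"
    proof -
      have "omul a (f y) = - omul a (omul (omul a y) a)" by (simp add: f_def lin)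
      also have "omul a (omul (omul a y) a) = omul (omul a (omul a y)) a" by (simp add: flex)
      also have "\<dots> = - omul y a" by (simp add: lalt aa lin)
      finally show ?thesis by simp
    qed
    have "rprod a (f x) (f y) = - omul (omul a (omul (oconj x) a)) (omul y a)"
      unfolding rprod_def c d by (simp add: lin)
    also have "\<dots> = - omul (omul a (omul (omul (oconj x) a) y)) a"
      by (simp add: mid_moufang)
    also have "\<dots> = f (lprod a x y)" by (simp add: f_def lprod_def)
    finally show ?thesis by simp
  qed
  show ?thesis unfolding algebra_iso_def using lf bf hom by blast
qed


lemma P_xa: assumes "ore a = 0"
  shows "omul x a = (2 * ore x) *\<^sub>R a - omul a x - (2 * inner a x) *\<^sub>R ounit"
  unfolding csimps by (simp add: assms[unfolded ore_def]; (intro conjI)?; algebra)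
lemma P_aax: assumes "ore a = 0"
  shows "omul a (omul a x) = - (nsq a *\<^sub>R x)"
  unfolding csimps by (simp add: assms[unfolded ore_def] power2_eq_square; (intro conjI)?; algebra)
lemma P_xax: assumes "ore a = 0"
  shows "omul x (omul a x) = nsq x *\<^sub>R a - (2 * inner a x) *\<^sub>R x"
  unfolding csimps by (simp add: assms[unfolded ore_def] power2_eq_square; (intro conjI)?; algebra)
lemma P_axa: assumes "ore a = 0"
  shows "omul (omul a x) a = - ((2 * ore x * nsq a) *\<^sub>R ounit) + nsq a *\<^sub>R x - (2 * inner a x) *\<^sub>R a"
  unfolding csimps by (simp add: assms[unfolded ore_def] power2_eq_square; (intro conjI)?; algebra)
lemma P_axx: assumes "ore a = 0"
  shows "omul (omul a x) x = (2 * ore x) *\<^sub>R omul a x - nsq x *\<^sub>R a"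
  unfolding csimps by (simp add: assms[unfolded ore_def] power2_eq_square; (intro conjI)?; algebra)
lemma P_axax: assumes "ore a = 0"
  shows "omul (omul a x) (omul a x) = - ((nsq a * nsq x) *\<^sub>R ounit) - (2 * inner a x) *\<^sub>R omul a x"
  unfolding csimps by (simp add: assms[unfolded ore_def] power2_eq_square; (intro conjI)?; algebra)
lemma P_cax: assumes "ore a = 0"
  shows "oconj (omul a x) = - omul a x - (2 * inner a x) *\<^sub>R ounit"
  unfolding csimps by (simp add: assms[unfolded ore_def]; (intro conjI)?; algebra)


lemma span_lin_closed:
  assumes "linear f" "\<And>b. b \<in> B \<Longrightarrow> f b \<in> span C" "u \<in> span B"
  shows "f u \<in> span C"
proof -
  have "f ` B \<subseteq> span C" using assms(2) by auto
  then have "span (f ` B) \<subseteq> span C" by (simp add: span_minimal subspace_span)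
  moreover have "f u \<in> span (f ` B)" using assms(1,3) by (simp add: span_linear_image)
  ultimately show ?thesis by auto
qed

lemma linear_omul_left: "linear (\<lambda>u. omul u v)"
  by (rule linearI) (simp_all add: lin)
lemma linear_omul_right: "linear (omul g)"
  by (rule linearI) (simp_all add: lin)
lemma linear_oconj: "linear oconj"
  by (rule linearI) (simp_all add: lin)

lemma upper:
  assumes ra: "ore a = 0" and na: "nsq a = 1"
  shows "dim (gen_subalgebra (lprod a) x) \<le> 4"
proof -
  define B where "B = {ounit, a, x, omul a x}"
  define S where "S = span B"
  note mem = span_add span_diff span_scale span_neg span_base
  have ca: "oconj a = - a" using oconj_imag[OF ra] .
  have aa: "omul a a = - ounit" using sq_imag[OF ra] na by simp
  have conjS: "oconj u \<in> S" if "u \<in> S" for u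
    unfolding S_def
  proof (rule span_lin_closed[OF linear_oconj _ that[unfolded S_def]])
    fix b assume "b \<in> B"
    then show "oconj b \<in> span B"
      unfolding B_def
      by (auto simp: oconj_ounit ca conj_gen[of x] P_cax[OF ra, of x]; intro mem; simp add: B_def)
  qed
  have base: "t \<in> S" if "t \<in> B" for t using that unfolding S_def by (rule span_base)
  have f_aa: "omul a a \<in> S" unfolding S_def aa by (intro mem; simp add: B_def)
  have f_ax: "omul a x \<in> S" by (rule base) (simp add: B_def)
  have f_xa: "omul x a \<in> S" unfolding S_def by (simp only: P_xa[OF ra, of x]; intro mem; simp add: B_def)
  have f_xx: "omul x x \<in> S" unfolding S_def by (simp only: sq_gen[of x]; intro mem; simp add: B_def)
  have f_aax: "omul a (omul a x) \<in> S" unfolding S_def by (simp only: P_aax[OF ra, of x]; intro mem; simp add: B_def)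
  have f_xax: "omul x (omul a x) \<in> S" unfolding S_def by (simp only: P_xax[OF ra, of x]; intro mem; simp add: B_def)
  have f_axa: "omul (omul a x) a \<in> S" unfolding S_def by (simp only: P_axa[OF ra, of x]; intro mem; simp add: B_def)
  have f_axx: "omul (omul a x) x \<in> S" unfolding S_def by (simp only: P_axx[OF ra, of x]; intro mem; simp add: B_def)
  have f_axax: "omul (omul a x) (omul a x) \<in> S" unfolding S_def by (simp only: P_axax[OF ra, of x]; intro mem; simp add: B_def)
  have mulgen: "omul g h \<in> S" if g: "g \<in> B" and h: "h \<in> B" for g h
  proof -
    have hS: "h \<in> S" using base h .
    have gS: "g \<in> S" using base g .
    consider "g = ounit" | "g = a" | "g = x" | "g = omul a x" using g by (auto simp: B_def)
    then show ?thesis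
    proof cases
      case 1 then show ?thesis using hS by (simp add: omul_ounit_left)
    next
      case 2
      consider "h = ounit" | "h = a" | "h = x" | "h = omul a x" using h by (auto simp: B_def)
      then show ?thesis by cases (use 2 gS f_aa f_ax f_aax in \<open>simp_all add: omul_ounit_right\<close>)
    next
      case 3
      consider "h = ounit" | "h = a" | "h = x" | "h = omul a x" using h by (auto simp: B_def)
      then show ?thesis by cases (use 3 gS f_xa f_xx f_xax in \<open>simp_all add: omul_ounit_right\<close>)
    next
      case 4
      consider "h = ounit" | "h = a" | "h = x" | "h = omul a x" using h by (auto simp: B_def)
      then show ?thesis by cases (use 4 gS f_axa f_axx f_axax in \<open>simp_all add: omul_ounit_right\<close>)
    qed
  qed
  have mulS1: "omul g v \<in> S" if "g \<in> B" "v \<in> S" for g v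
    unfolding S_def
    using span_lin_closed[OF linear_omul_right[of g] _ that(2)[unfolded S_def], of B]
      mulgen that(1) by (simp add: S_def)
  have mulS: "omul u v \<in> S" if "u \<in> S" "v \<in> S" for u v
    unfolding S_def
    using span_lin_closed[OF linear_omul_left[of v] _ that(1)[unfolded S_def], of B]
      mulS1 that(2) by (simp add: S_def)
  have aS: "a \<in> S" unfolding S_def B_def by (simp add: span_base)
  have closed: "\<forall>u\<in>S. \<forall>v\<in>S. lprod a u v \<in> S"
    unfolding lprod_def using mulS conjS aS by simp
  have "gen_subalgebra (lprod a) x \<subseteq> S"
    unfolding gen_subalgebra_def
    by (rule Inter_lower) (use closed in \<open>simp add: S_def subspace_span B_def span_base\<close>)
  then have "dim (gen_subalgebra (lprod a) x) \<le> dim S" by (rule dim_subset)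
  also have "dim S \<le> card B" unfolding S_def by (rule dim_le_card) (auto simp: B_def)
  also have "card B \<le> 4" unfolding B_def by (auto simp: card_insert_if)
  finally show ?thesis .
qed


lemma lower_vals:
  assumes ra: "ore a = 0" and re: "ore e = 0" and na: "nsq a = 1" and ne: "nsq e = 1" and ie: "inner e a = 0"
  shows "lprod a (ounit + e) (ounit + e) = 2 *\<^sub>R omul a e"
    and "lprod a (2 *\<^sub>R omul a e) (ounit + e) = 2 *\<^sub>R (ounit - e)"
    and "lprod a (2 *\<^sub>R omul a e) (2 *\<^sub>R omul a e) = - 4 *\<^sub>R a"
proof -
  have ca: "oconj a = - a" using oconj_imag[OF ra] .
  have ce: "oconj e = - e" using oconj_imag[OF re] .
  have aa: "omul a a = - ounit" using sq_imag[OF ra] na by simp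
  have ee: "omul e e = - ounit" using sq_imag[OF re] ne by simp
  have ea: "omul e a = - omul a e" using anticomm[OF ra re] ie by simp
  have eae: "omul (omul e a) e = a" using E[OF re, of a] ne ie ca by simp
  have cae: "oconj (omul a e) = - omul a e" by (simp add: oconj_omul ca ce lin ea)
  have aea: "omul (omul a e) a = e"
  proof -
    have "omul (omul a e) a = omul a (omul e a)" by (simp add: flex)
    also have "\<dots> = - omul (omul a a) e" by (simp add: ea lin lalt)
    finally show ?thesis by (simp add: aa lin)
  qed
  have aee: "omul (omul a e) e = - a" by (simp add: ralt ee lin)
  show "lprod a (ounit + e) (ounit + e) = 2 *\<^sub>R omul a e"
    unfolding lprod_def by (simp add: lin ce ea aee scaleR_2)
  show "lprod a (2 *\<^sub>R omul a e) (ounit + e) = 2 *\<^sub>R (ounit - e)"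
    unfolding lprod_def by (simp add: lin cae aea ee scaleR_diff_right)
  have "omul e (omul a e) = a" using eae by (simp add: flex)
  then show "lprod a (2 *\<^sub>R omul a e) (2 *\<^sub>R omul a e) = - 4 *\<^sub>R a"
    unfolding lprod_def by (simp add: lin cae aea)
qed


lemma gen_mem: "x \<in> gen_subalgebra m x"
  unfolding gen_subalgebra_def by auto

lemma gen_closed: "u \<in> gen_subalgebra m x \<Longrightarrow> v \<in> gen_subalgebra m x \<Longrightarrow> m u v \<in> gen_subalgebra m x"
  unfolding gen_subalgebra_def by auto

lemma lprod_zero: "lprod a 0 0 = 0" unfolding lprod_def by (simp add: lin)

lemma lower:
  assumes ra: "ore a = 0" and na: "nsq a = 1"
  shows "4 \<le> dim (gen_subalgebra (lprod a) (ounit + eo a))"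
proof -
  define e where "e = eo a"
  have re: "ore e = 0" and ie: "inner e a = 0" and ne: "nsq e = 1" using eo_props e_def by auto
  define G where "G = gen_subalgebra (lprod a) (ounit + e)"
  define x0 where "x0 = ounit + e"
  define y where "y = 2 *\<^sub>R omul a e"
  define w where "w = 2 *\<^sub>R (ounit - e)"
  define v where "v = - 4 *\<^sub>R a"
  note vals = lower_vals[OF ra re na ne ie]
  have x0G: "x0 \<in> G" unfolding G_def x0_def by (rule gen_mem)
  have Gc: "lprod a p q \<in> G" if "p \<in> G" "q \<in> G" for p q
    using that unfolding G_def by (rule gen_closed)
  have yG: "y \<in> G" using Gc[OF x0G x0G] vals(1) unfolding G_def x0_def y_def by simp
  have wG: "w \<in> G" using Gc[OF yG x0G] vals(2) unfolding G_def x0_def y_def w_def by simp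
  have vG: "v \<in> G" using Gc[OF yG yG] vals(3) unfolding G_def y_def v_def by simp
  have uu: "inner ounit ounit = 1" by (simp add: inner_unit ore_lin)
  have ue: "inner ounit e = 0" "inner e ounit = 0" using re by (simp_all add: inner_unit inner_commute)
  have ua: "inner ounit a = 0" "inner a ounit = 0" using ra by (simp_all add: inner_unit inner_commute)
  have ee: "inner e e = 1" using ne by (simp add: nsq_def)
  have aa: "inner a a = 1" using na by (simp add: nsq_def)
  have ea: "inner a e = 0" using ie by (simp add: inner_commute)
  have uae: "inner ounit (omul a e) = 0" "inner (omul a e) ounit = 0"
    using inner_unit_mul[OF ra re] ea by (simp_all add: inner_commute)
  have eae: "inner e (omul a e) = 0" "inner (omul a e) e = 0"
    using inner_e_ae[OF ra, of e] by (simp_all add: inner_commute)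
  have aae: "inner a (omul a e) = 0" "inner (omul a e) a = 0"
    using inner_a_ae[OF re, of a] by (simp_all add: inner_commute)
  note isimps = inner_add_left inner_add_right inner_diff_left inner_diff_right
    inner_scaleR_left inner_scaleR_right inner_minus_left inner_minus_right
    uu ue ua ee aa ea ie uae eae aae
  have o1: "inner x0 y = 0" "inner x0 w = 0" "inner x0 v = 0"
       "inner y w = 0" "inner y v = 0" "inner w v = 0"
    unfolding x0_def y_def w_def v_def by (simp_all add: isimps)
  have n1: "inner x0 x0 \<noteq> 0" "inner w w \<noteq> 0" "inner v v \<noteq> 0"
    unfolding x0_def w_def v_def by (simp_all add: isimps)
  have "v \<noteq> 0" using n1 by auto
  then have "y \<noteq> 0" using vals(3) lprod_zero unfolding y_def v_def by metis
  then have n2: "inner y y \<noteq> 0" by simp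
  define Bs where "Bs = {x0, y, w, v}"
  have neq: "x0 \<noteq> y" "x0 \<noteq> w" "x0 \<noteq> v" "y \<noteq> w" "y \<noteq> v" "w \<noteq> v"
    using o1 n1 n2 by auto
  have "pairwise orthogonal Bs"
    unfolding Bs_def pairwise_def orthogonal_def using o1 by (auto simp: inner_commute)
  moreover have "0 \<notin> Bs" unfolding Bs_def using n1 n2 by auto
  ultimately have ind: "independent Bs" by (rule pairwise_orthogonal_independent)
  have "card Bs = 4" unfolding Bs_def using neq by auto
  moreover have "card Bs \<le> dim G"
    by (rule independent_card_le_dim) (use x0G yG wG vG ind in \<open>auto simp: Bs_def\<close>)
  ultimately show ?thesis unfolding G_def e_def by simp
qed

lemma degree4:
  assumes ra: "ore a = 0" and na: "nsq a = 1"
  shows "algebra_degree (lprod a) = 4"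
  unfolding algebra_degree_def
proof (rule Least_equality)
  show "\<forall>x. dim (gen_subalgebra (lprod a) x) \<le> 4" using upper[OF ra na] by blast
next
  fix n assume "\<forall>x. dim (gen_subalgebra (lprod a) x) \<le> n"
  then show "4 \<le> n" using lower[OF ra na] by (meson order_trans)
qed


theorem proposition5:
  fixes a :: octonion
  assumes "norm a = 1"
  shows "(square_assoc_identity (lprod a) \<longleftrightarrow> square_assoc_identity (rprod a))
       \<and> (square_assoc_identity (rprod a) \<longleftrightarrow> (omul a a = ounit \<or> omul a a = - ounit))
       \<and> ((omul a a = ounit \<or> omul a a = - ounit) \<longrightarrow> algebra_iso (lprod a) (rprod a))
       \<and> (omul a a = - ounit \<longrightarrow> algebra_degree (lprod a) = 4)"
proof -
  have na: "nsq a = 1" using assms by (simp add: nsq_norm)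
  let ?P = "omul a a = ounit \<or> omul a a = - ounit"
  have LP: "square_assoc_identity (lprod a) \<Longrightarrow> ?P"
    using l_forces[OF na] cube_forces[OF na] by blast
  have RP: "square_assoc_identity (rprod a) \<Longrightarrow> ?P"
    using r_forces[OF na] cube_forces[OF na] by blast
  have plus_real: "\<exists>s. a = s *\<^sub>R ounit" if "omul a a = ounit"
  proof -
    from sq_plus[OF na that] show ?thesis
      by (metis scaleR_minus1_left scaleR_one)
  qed
  have minus_imag: "ore a = 0" if "omul a a = - ounit" using sq_minus[OF na that] .
  have PL: "square_assoc_identity (lprod a) \<and> square_assoc_identity (rprod a) \<and> algebra_iso (lprod a) (rprod a)"
    if ?P
  proof (cases "omul a a = ounit")
    case True
    then obtain s where "a = s *\<^sub>R ounit" using plus_real by blast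
    then show ?thesis using lprod_real_ok rprod_real_ok iso_real by blast
  next
    case False
    then have "omul a a = - ounit" using that by blast
    then have ra: "ore a = 0" by (rule minus_imag)
    then have "oconj a = - a" by (rule oconj_imag)
    then show ?thesis using lprod_imag_ok rprod_imag_ok iso_imag[OF ra na] by blast
  qed
  have D: "omul a a = - ounit \<longrightarrow> algebra_degree (lprod a) = 4"
    using minus_imag degree4[OF _ na] by blast
  show ?thesis using LP RP PL D by blast
qed

end
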